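(* Let $K$ be a field, $P=K[x_1,\dots,x_n]$, $g_1,\dots,g_r\in P\setminus\{0\}$ such that $I=\langle g_1,\dots,g_r\rangle$ is a proper ideal, and let $Z=(z_1,\dots,z_s)$ be a tuple of distinct indeterminates among $x_1,\dots,x_n$. The procedure $\mathrm{OPTCHECK}$ applied to $(g_1,\dots,g_r)$ and $Z$ terminates and returns either ``Fail'' or a tuple $W\in\mathbb{N}^n$. If it returns a tuple $W$, then there exists a $Z$-separating tuple $(f_1,\dots,f_s)$ of polynomials in $I$ such that every term ordering $\sigma$ compatible with the grading given by $W$ satisfies $\operatorname{LT}_\sigma(f_i)=z_i$ for $i=1,\dots,s$.
   Context: $\operatorname{Supp}(f)$ is the set of terms occurring in $f$; $\operatorname{Lin}(f)$ is the homogeneous degree-1 component of $f$; $\langle\cdot\rangle_K$ denotes $K$-linear span; $P_{\le\delta}$ is the set of polynomials of degree $\le\delta$. A tuple $(f_1,\dots,f_s)$ of polynomials in an ideal $I$ is $Z$-separating if there is a term ordering $\sigma$ with $\operatorname{LT}_\sigma(f_i)=z_i$ for all $i$. For $W\in\mathbb{N}^n$ the $W$-degree of $x_1^{a_1}\cdots x_n^{a_n}$ is $\sum w_ia_i$; a term ordering $\sigma$ is compatible with the grading given by $W$ if $t>_\sigma t'$ whenever the $W$-degree of $t$ exceeds that of $t'$. Procedure $\mathrm{LI}$ (linear interreduction), applied to a tuple $Z=(z_1,\dots,z_s)$ of distinct indeterminates and polynomials $g_1,\dots,g_r$: let $t_1>\dots>t_m$ (lexicographic order, $x_1>\dots>x_n$)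 be the terms of $\bigcup_j\operatorname{Supp}(g_j)$ other than $z_1,\dots,z_s$; form the coefficient matrix $M$ of $g_1,\dots,g_r$ w.r.t. column order $(z_1,\dots,z_s,t_1,\dots,t_m)$; output the polynomials whose coefficient vectors are the nonzero rows of the reduced row echelon form of $M$, in order. Procedure $\mathrm{OPTCHECK}$ on input $(g_1,\dots,g_r)$ and $Z$: (1) set $w_1=\dots=w_n=0$, $\delta=\max_j\deg(g_j)$, $d=1$. (2) In each $g_j$ delete every monomial not divisible by some indeterminate of $Z$. (3) If $\dim_K\langle\operatorname{Lin}(g_1),\dots,\operatorname{Lin}(g_r)\rangle_K<\#Z$, return ``Fail''. (4) Repeat: (i) form $H=\{x_ig_j : x_i\text{ an indeterminate not in the current }Z,\ j=1,\dots,r\}$ from the current list; fix a degree-compatible term ordering $\tau$ and compute a $K$-basis $h_1,\dots,h_m$ of $\langle H\rangle_K$ with pairwise distinct $\tau$-leading terms; let $q_1,\dots,q_u$ be those $h_k$ lying in $P_{\le\delta}$; replace the current list by the output of $\mathrm{LI}$ applied to the current $Z$ and $(g_1,\dots,g_r,q_1,\dots,q_u)$; (ii) let $\widetilde Z$ be the set of indeterminates of the current $Z$ that occur as elements of the current list; (iii) if $\widetilde Z=\emptyset$, return ``Fail''; (iv) for each $z\in\widetilde Z$, say $z=x_k$, set $w_k=d$ and remove $z$ from $Z$; (v) in each current $g_j$ delete every monomial not divisible by some indeterminate of the (updated) $Z$; (vi) replace $d$ by $2\delta d+1$; until $Z$ is empty. (5) Return $W=(w_1,\dots,w_n)$. 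*)

theory Defs
  imports Complex_Main "HOL-Library.Poly_Mapping"
begin

text \<open>Terms (power products) are finitely supported exponent vectors nat \<Rightarrow>0 nat;
  the indeterminate x_(i+1) of the paper is the index i (0-based), so
  P = K[x_1,...,x_n] consists of the polynomials all of whose terms only
  involve indices < n.\<close>

type_synonym monom = "nat \<Rightarrow>\<^sub>0 nat"
type_synonym 'a mpoly = "monom \<Rightarrow>\<^sub>0 'a"

definition is_term :: "nat \<Rightarrow> monom \<Rightarrow> bool" where
  "is_term n t \<longleftrightarrow> Poly_Mapping.keys t \<subseteq> {..<n}"

definition in_P :: "nat \<Rightarrow> 'a::zero mpoly \<Rightarrow> bool" where
  "in_P n f \<longleftrightarrow> (\<forall>t\<in>Poly_Mapping.keys f. is_term n t)"

definition var_term :: "nat \<Rightarrow> monom" where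
  "var_term i = Poly_Mapping.single i 1"

definition var :: "nat \<Rightarrow> 'a::{zero,one} mpoly" where
  "var i = Poly_Mapping.single (var_term i) 1"

definition tdeg :: "monom \<Rightarrow> nat" where
  "tdeg t = (\<Sum>i\<in>Poly_Mapping.keys t. Poly_Mapping.lookup t i)"

definition pdeg :: "'a::zero mpoly \<Rightarrow> nat" where
  "pdeg f = Max (tdeg ` Poly_Mapping.keys f)"

definition smul :: "'a::field \<Rightarrow> 'a mpoly \<Rightarrow> 'a mpoly" where
  "smul c f = Poly_Mapping.map (\<lambda>x. c * x) f"

abbreviation kspan :: "'a::field mpoly set \<Rightarrow> 'a mpoly set" where
  "kspan S \<equiv> module.span smul S"

abbreviation kdim :: "'a::field mpoly set \<Rightarrow> nat" where
  "kdim S \<equiv> vector_space.dim smul S"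

abbreviation kindependent :: "'a::field mpoly set \<Rightarrow> bool" where
  "kindependent S \<equiv> module.independent smul S"

definition Lin :: "'a::zero mpoly \<Rightarrow> 'a mpoly" where
  "Lin f = Poly_Mapping.mapp (\<lambda>t a. if tdeg t = 1 then a else 0) f"

definition restrictZ :: "nat set \<Rightarrow> 'a::zero mpoly \<Rightarrow> 'a mpoly" where
  "restrictZ Z f = Poly_Mapping.mapp (\<lambda>t a. if (\<exists>z\<in>Z. 0 < Poly_Mapping.lookup t z) then a else 0) f"

definition ideal_P :: "nat \<Rightarrow> 'a::comm_ring_1 mpoly list \<Rightarrow> 'a mpoly set" where
  "ideal_P n gs = {(\<Sum>i<length gs. hs ! i * gs ! i) | hs.
                     length hs = length gs \<and> (\<forall>h\<in>set hs. in_P n h)}"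

text \<open>A monom ordering on the terms of P, given by its strict part lt
  (lt s t means s < t): a strict linear order on the terms in x_1..x_n,
  compatible with multiplication, with 1 the minimal monom.\<close>
definition term_order :: "nat \<Rightarrow> (monom \<Rightarrow> monom \<Rightarrow> bool) \<Rightarrow> bool" where
  "term_order n lt \<longleftrightarrow>
     (\<forall>s. is_term n s \<longrightarrow> \<not> lt s s) \<and>
     (\<forall>s t u. is_term n s \<and> is_term n t \<and> is_term n u \<and> lt s t \<and> lt t u \<longrightarrow> lt s u) \<and>
     (\<forall>s t. is_term n s \<and> is_term n t \<and> s \<noteq> t \<longrightarrow> lt s t \<or> lt t s) \<and>
     (\<forall>t. is_term n t \<and> t \<noteq> 0 \<longrightarrow> lt 0 t) \<and>
     (\<forall>s t u. is_term n s \<and> is_term n t \<and> is_term n u \<and> lt s t \<longrightarrow> lt (s + u) (t + u))"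

definition is_LT :: "(monom \<Rightarrow> monom \<Rightarrow> bool) \<Rightarrow> 'a::zero mpoly \<Rightarrow> monom \<Rightarrow> bool" where
  "is_LT lt f t \<longleftrightarrow> t \<in> Poly_Mapping.keys f \<and> (\<forall>s\<in>Poly_Mapping.keys f. s \<noteq> t \<longrightarrow> lt s t)"

definition degree_compatible :: "nat \<Rightarrow> (monom \<Rightarrow> monom \<Rightarrow> bool) \<Rightarrow> bool" where
  "degree_compatible n lt \<longleftrightarrow>
     (\<forall>s t. is_term n s \<and> is_term n t \<and> tdeg s < tdeg t \<longrightarrow> lt s t)"

text \<open>W-degree and compatibility with the grading given by W (W as a list of length n)\<close>
definition wdeg :: "nat list \<Rightarrow> monom \<Rightarrow> nat" where
  "wdeg W t = (\<Sum>i<length W. W ! i * Poly_Mapping.lookup t i)"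

definition W_compatible :: "nat \<Rightarrow> nat list \<Rightarrow> (monom \<Rightarrow> monom \<Rightarrow> bool) \<Rightarrow> bool" where
  "W_compatible n W lt \<longleftrightarrow>
     (\<forall>s t. is_term n s \<and> is_term n t \<and> wdeg W s < wdeg W t \<longrightarrow> lt s t)"

definition Z_separating :: "nat \<Rightarrow> nat list \<Rightarrow> 'a::zero mpoly list \<Rightarrow> bool" where
  "Z_separating n Z fs \<longleftrightarrow> length fs = length Z \<and>
     (\<exists>lt. term_order n lt \<and> (\<forall>i<length Z. is_LT lt (fs ! i) (var_term (Z ! i))))"

section \<open>Procedure LI (linear interreduction)\<close>

text \<open>lexicographic order with x_1 > ... > x_n: lex_gt t t' means t >_lex t'\<close>
definition lex_gt :: "monom \<Rightarrow> monom \<Rightarrow> bool" where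
  "lex_gt t t' \<longleftrightarrow> (\<exists>i. Poly_Mapping.lookup t' i < Poly_Mapping.lookup t i \<and> (\<forall>j<i. Poly_Mapping.lookup t j = Poly_Mapping.lookup t' j))"

text \<open>column order (z_1,...,z_s,t_1,...,t_m): col_before Z t t' means that the
  column of t comes strictly before the column of t'\<close>
definition col_before :: "nat list \<Rightarrow> monom \<Rightarrow> monom \<Rightarrow> bool" where
  "col_before Z t t' \<longleftrightarrow>
     (\<exists>k l. k < l \<and> l < length Z \<and> t = var_term (Z ! k) \<and> t' = var_term (Z ! l)) \<or>
     (t \<in> var_term ` set Z \<and> t' \<notin> var_term ` set Z) \<or>
     (t \<notin> var_term ` set Z \<and> t' \<notin> var_term ` set Z \<and> lex_gt t t')"

definition is_pivot :: "nat list \<Rightarrow> 'a::zero mpoly \<Rightarrow> monom \<Rightarrow> bool" where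
  "is_pivot Z p t \<longleftrightarrow> t \<in> Poly_Mapping.keys p \<and> (\<forall>s\<in>Poly_Mapping.keys p. s \<noteq> t \<longrightarrow> col_before Z t s)"

text \<open>LI Z gs ps: ps is the list of polynomials given by the nonzero rows, in order,
  of the reduced row echelon form of the coefficient matrix of gs w.r.t. the
  column order above.  This is the defining property of the reduced row echelon
  form: same row space, nonzero rows, strictly increasing pivot columns, pivot
  entries 1, and all other entries in pivot columns 0.\<close>
definition LI :: "nat list \<Rightarrow> 'a::field mpoly list \<Rightarrow> 'a mpoly list \<Rightarrow> bool" where
  "LI Z gs ps \<longleftrightarrow>
     kspan (set ps) = kspan (set gs) \<and>
     (\<forall>p\<in>set ps. p \<noteq> 0) \<and>
     (\<exists>piv. (\<forall>i<length ps. is_pivot Z (ps ! i) (piv i) \<and> Poly_Mapping.lookup (ps ! i) (piv i) = 1) \<and>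
            (\<forall>i j. i < j \<and> j < length ps \<longrightarrow> col_before Z (piv i) (piv j)) \<and>
            (\<forall>i j. i < length ps \<and> j < length ps \<and> i \<noteq> j \<longrightarrow> Poly_Mapping.lookup (ps ! j) (piv i) = 0))"

section \<open>Procedure OPTCHECK, as a (nondeterministic) transition system\<close>

text \<open>Step 4(i): from the current list gs and current Z, the new list gs'.
  The choices of the degree-compatible monom ordering tau and of the basis hs
  are arbitrary.\<close>
definition step_i :: "nat \<Rightarrow> nat \<Rightarrow> 'a::field mpoly list \<Rightarrow> nat list \<Rightarrow> 'a mpoly list \<Rightarrow> bool" where
  "step_i n \<delta> gs Z gs' \<longleftrightarrow>
     (let H = [var i * g. i \<leftarrow> [0..<n], i \<notin> set Z, g \<leftarrow> gs] in
      \<exists>tau hs.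
        term_order n tau \<and> degree_compatible n tau \<and>
        distinct hs \<and> kindependent (set hs) \<and> kspan (set hs) = kspan (set H) \<and>
        (\<forall>i j. i < j \<and> j < length hs \<longrightarrow>
              \<not> (\<exists>t. is_LT tau (hs ! i) t \<and> is_LT tau (hs ! j) t)) \<and>
        (\<forall>i<length hs. \<exists>t. is_LT tau (hs ! i) t) \<and>
        LI Z (gs @ filter (\<lambda>h. pdeg h \<le> \<delta>) hs) gs')"

datatype 'p oc_config =
    Run "'p list" "nat list" "nat \<Rightarrow> nat" nat  \<comment> \<open>current list, Z, weights w, d\<close>
  | Done "nat list option"   \<comment> \<open>None = Fail, Some W = return W\<close>

text \<open>initial configuration (steps 1--3)\<close>
definition oc_init :: "nat \<Rightarrow> 'a::field mpoly list \<Rightarrow> nat list \<Rightarrow> 'a mpoly oc_config" where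
  "oc_init n gs Z =
     (let gs1 = map (restrictZ (set Z)) gs in
      if kdim (kspan (set (map Lin gs1))) < length Z then Done None
      else Run gs1 Z (\<lambda>_. 0) 1)"

definition delta :: "'a::zero mpoly list \<Rightarrow> nat" where
  "delta gs = Max (set (map pdeg gs))"

text \<open>one pass (i)--(vi) through the loop of step 4, followed by the "until Z is empty" test\<close>
inductive oc_step :: "nat \<Rightarrow> nat \<Rightarrow> 'a::field mpoly oc_config \<Rightarrow> 'a mpoly oc_config \<Rightarrow> bool"
  for n :: nat and \<delta> :: nat where
  fail: "\<lbrakk> step_i n \<delta> gs Z gs';
          {z \<in> set Z. var z \<in> set gs'} = {} \<rbrakk>
        \<Longrightarrow> oc_step n \<delta> (Run gs Z w d) (Done None)"
| cont: "\<lbrakk> step_i n \<delta> gs Z gs';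
          Zt = {z \<in> set Z. var z \<in> set gs'}; Zt \<noteq> {};
          Z' = filter (\<lambda>z. z \<notin> Zt) Z;
          w' = (\<lambda>k. if k \<in> Zt then d else w k);
          gs'' = map (restrictZ (set Z')) gs';
          d' = 2 * \<delta> * d + 1;
          c' = (if Z' = [] then Done (Some (map w' [0..<n])) else Run gs'' Z' w' d') \<rbrakk>
        \<Longrightarrow> oc_step n \<delta> (Run gs Z w d) c'"

definition oc_reachable :: "nat \<Rightarrow> 'a::field mpoly list \<Rightarrow> nat list \<Rightarrow> 'a mpoly oc_config \<Rightarrow> bool" where
  "oc_reachable n gs Z c \<longleftrightarrow> (oc_step n (delta gs))\<^sup>*\<^sup>* (oc_init n gs Z) c"

end

theory Submission
  imports Defs
begin

abbreviation lk where "lk \<equiv> Poly_Mapping.lookup"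
abbreviation ks where "ks \<equiv> Poly_Mapping.keys"

lemma smul_eq: "smul c f = Poly_Mapping.single 0 c * f"
  unfolding smul_def by (rule mult_map_scale_conv_mult)

interpretation M: module "smul :: 'a::field \<Rightarrow> 'a mpoly \<Rightarrow> 'a mpoly"
  by unfold_locales (auto simp: smul_eq algebra_simps mult_single single_add)

lemma lookup_smul[simp]: "lk (smul c f) t = c * lk f t"
  unfolding smul_def by (simp add: map.rep_eq when_def)

lemma lex_irrefl: "\<not> lex_gt t t" unfolding lex_gt_def by auto

lemma lex_trans: assumes "lex_gt a b" "lex_gt b c" shows "lex_gt a c"
proof -
  obtain i where i: "lk b i < lk a i" "\<forall>j<i. lk a j = lk b j" using assms(1) unfolding lex_gt_def by auto
  obtain k where k: "lk c k < lk b k" "\<forall>j<k. lk b j = lk c j" using assms(2) unfolding lex_gt_def by auto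
  show ?thesis unfolding lex_gt_def
  proof (cases i k rule: linorder_cases)
    case less then show "\<exists>i. lk c i < lk a i \<and> (\<forall>j<i. lk a j = lk c j)"
      using i k by (intro exI[of _ i]) auto
  next
    case equal then show "\<exists>i. lk c i < lk a i \<and> (\<forall>j<i. lk a j = lk c j)"
      using i k by (intro exI[of _ i]) auto
  next
    case greater then show "\<exists>i. lk c i < lk a i \<and> (\<forall>j<i. lk a j = lk c j)"
      using i k by (intro exI[of _ k]) auto
  qed
qed

lemma lex_total: assumes "s \<noteq> t" shows "lex_gt s t \<or> lex_gt t s"
proof -
  have "\<exists>i. lk s i \<noteq> lk t i" using assms by (meson poly_mapping_eqI)
  define i where "i = (LEAST i. lk s i \<noteq> lk t i)"
  have ne: "lk s i \<noteq> lk t i" unfolding i_def by (rule LeastI_ex) fact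
  have eq: "\<forall>j<i. lk s j = lk t j" unfolding i_def using not_less_Least by blast
  show ?thesis
  proof (cases "lk s i < lk t i")
    case True then show ?thesis unfolding lex_gt_def using eq by auto
  next
    case False then have "lk t i < lk s i" using ne by auto
    then show ?thesis unfolding lex_gt_def using eq by auto
  qed
qed

lemma lex_add: "lex_gt s t \<Longrightarrow> lex_gt (s + u) (t + u)"
  unfolding lex_gt_def by (auto simp: lookup_add)

lemma lex_zero: assumes "t \<noteq> 0" shows "lex_gt t 0"
proof -
  have "lex_gt t 0 \<or> lex_gt 0 t" using lex_total assms by auto
  moreover have "\<not> lex_gt 0 t" unfolding lex_gt_def by auto
  ultimately show ?thesis by auto
qed

definition ordW :: "(monom \<Rightarrow> nat) \<Rightarrow> monom \<Rightarrow> monom \<Rightarrow> bool" where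
  "ordW f s t \<longleftrightarrow> f s < f t \<or> (f s = f t \<and> lex_gt t s)"

lemma ordW_irrefl: "\<not> ordW f s s" unfolding ordW_def using lex_irrefl by auto

lemma ordW_trans: "ordW f a b \<Longrightarrow> ordW f b c \<Longrightarrow> ordW f a c"
  unfolding ordW_def using lex_trans by fastforce

lemma ordW_total: "s \<noteq> t \<Longrightarrow> ordW f s t \<or> ordW f t s"
  unfolding ordW_def using lex_total by fastforce

lemma ordW_term_order:
  assumes add: "\<And>s t. f (s + t) = f s + f t"
  shows "term_order n (ordW f)"
proof -
  have f0: "f 0 = 0" using add[of 0 0] by simp
  show ?thesis unfolding term_order_def
  proof (intro conjI allI impI)
    fix t :: monom assume "is_term n t \<and> t \<noteq> 0"
    then show "ordW f 0 t" unfolding ordW_def using lex_zero f0 by auto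
  next
    fix s t u :: monom assume "is_term n s \<and> is_term n t \<and> is_term n u \<and> ordW f s t"
    then show "ordW f (s + u) (t + u)" unfolding ordW_def using lex_add[of t s u] add by auto
  qed (use ordW_irrefl ordW_trans ordW_total in blast)+
qed

lemma wdeg_add: "wdeg W (s + t) = wdeg W s + wdeg W t"
  unfolding wdeg_def by (simp add: lookup_add algebra_simps sum.distrib)

lemma W_comp_ordW: "W_compatible n W (ordW (wdeg W))"
  unfolding W_compatible_def ordW_def by auto

lemma tdeg_wdeg: assumes "is_term n s" shows "tdeg s = wdeg (replicate n 1) s"
proof -
  have "tdeg s = (\<Sum>i<n. lk s i)"
    unfolding tdeg_def using assms unfolding is_term_def
    by (intro sum.mono_neutral_left) (auto simp: in_keys_iff)
  then show ?thesis unfolding wdeg_def by simp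
qed

lemma deg_comp_ordW: "degree_compatible n (ordW (wdeg (replicate n 1)))"
  unfolding degree_compatible_def ordW_def using tdeg_wdeg by metis

lemma keys_smul_sub: "ks (smul c (f :: 'a::field mpoly)) \<subseteq> ks f"
  by (auto simp: in_keys_iff)

lemma keys_sub_subspace: "M.subspace {p :: 'a::field mpoly. ks p \<subseteq> T}"
proof (rule M.subspaceI)
  show "0 \<in> {p :: 'a::field mpoly. ks p \<subseteq> T}" by simp
next
  fix x y :: "'a mpoly" assume "x \<in> {p. ks p \<subseteq> T}" "y \<in> {p. ks p \<subseteq> T}"
  then show "x + y \<in> {p. ks p \<subseteq> T}" using keys_add[of x y] by blast
next
  fix c and x :: "'a mpoly" assume "x \<in> {p. ks p \<subseteq> T}"
  then show "smul c x \<in> {p. ks p \<subseteq> T}" using keys_smul_sub[of c x] by blast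
qed

lemma least_exists:
  assumes tr: "\<forall>x y z. R x y \<longrightarrow> R y z \<longrightarrow> R x z"
    and tot: "\<forall>x y. x \<noteq> y \<longrightarrow> R x y \<or> R y x"
  shows "finite T \<Longrightarrow> T \<noteq> {} \<Longrightarrow> \<exists>m\<in>T. \<forall>x\<in>T. x \<noteq> m \<longrightarrow> R m x"
proof (induction T rule: finite_ne_induct)
  case (singleton x) then show ?case by auto
next
  case (insert x F)
  then obtain m where m: "m \<in> F" "\<forall>y\<in>F. y \<noteq> m \<longrightarrow> R m y" by auto
  show ?case
  proof (cases "R x m")
    case True
    have "\<forall>y\<in>insert x F. y \<noteq> x \<longrightarrow> R x y"
    proof (intro ballI impI)
      fix y assume "y \<in> insert x F" "y \<noteq> x"
      then have "y \<in> F" by simp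
      then show "R x y" using m True tr by (cases "y = m") blast+
    qed
    then show ?thesis by blast
  next
    case False
    have "x \<noteq> m" using insert(3) m(1) by auto
    then have "R m x" using tot False by blast
    then show ?thesis using m by (intro bexI[of _ m]) auto
  qed
qed

definition rref_prop :: "(monom \<Rightarrow> monom \<Rightarrow> bool) \<Rightarrow> 'a::field mpoly list \<Rightarrow> (nat \<Rightarrow> monom) \<Rightarrow> bool" where
  "rref_prop R ps piv \<longleftrightarrow>
     (\<forall>p\<in>set ps. p \<noteq> 0) \<and>
     (\<forall>i<length ps. piv i \<in> ks (ps!i) \<and> (\<forall>s\<in>ks (ps!i). s \<noteq> piv i \<longrightarrow> R (piv i) s) \<and> lk (ps!i) (piv i) = 1) \<and>
     (\<forall>i j. i < j \<and> j < length ps \<longrightarrow> R (piv i) (piv j)) \<and>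
     (\<forall>i j. i < length ps \<and> j < length ps \<and> i \<noteq> j \<longrightarrow> lk (ps!j) (piv i) = 0)"
lemma rref_D:
  assumes "rref_prop R ps piv" "i < length ps"
  shows "ps!i \<noteq> 0" "piv i \<in> ks (ps!i)" "lk (ps!i) (piv i) = 1"
    "\<And>s. s \<in> ks (ps!i) \<Longrightarrow> s \<noteq> piv i \<Longrightarrow> R (piv i) s"
proof -
  have a: "\<forall>p\<in>set ps. p \<noteq> 0" and b: "\<forall>i<length ps. piv i \<in> ks (ps!i) \<and> (\<forall>s\<in>ks (ps!i). s \<noteq> piv i \<longrightarrow> R (piv i) s) \<and> lk (ps!i) (piv i) = 1"
    using assms(1) unfolding rref_prop_def by blast+
  show "ps!i \<noteq> 0" using a assms(2) by simp
  show "piv i \<in> ks (ps!i)" "lk (ps!i) (piv i) = 1" using b assms(2) by blast+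
  show "\<And>s. s \<in> ks (ps!i) \<Longrightarrow> s \<noteq> piv i \<Longrightarrow> R (piv i) s" using b assms(2) by blast
qed
lemma rref_D2: "rref_prop R ps piv \<Longrightarrow> i < j \<Longrightarrow> j < length ps \<Longrightarrow> R (piv i) (piv j)"
  unfolding rref_prop_def by blast
lemma rref_D3: "rref_prop R ps piv \<Longrightarrow> i < length ps \<Longrightarrow> j < length ps \<Longrightarrow> i \<noteq> j \<Longrightarrow> lk (ps!j) (piv i) = 0"
  unfolding rref_prop_def by blast

lemma rref_exists:
  fixes R :: "monom \<Rightarrow> monom \<Rightarrow> bool"
  assumes tr: "\<forall>x y z. R x y \<longrightarrow> R y z \<longrightarrow> R x z"
    and tot: "\<forall>x y. x \<noteq> y \<longrightarrow> R x y \<or> R y x"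
  shows "finite T \<Longrightarrow> (\<forall>x\<in>set xs. ks x \<subseteq> T) \<Longrightarrow>
    \<exists>ps piv. kspan (set ps) = kspan (set (xs :: 'a::field mpoly list)) \<and> (\<forall>p\<in>set ps. ks p \<subseteq> T) \<and> rref_prop R ps piv"
proof (induction "card T" arbitrary: T xs rule: less_induct)
  case less
  show ?case
  proof (cases "T = {}")
    case True
    then have "\<forall>x\<in>set xs. x = 0" using less.prems by auto
    then have "kspan (set xs) = kspan (set [])"
      unfolding M.span_eq by (auto simp: M.span_zero)
    moreover have "rref_prop R [] (\<lambda>_. 0)" unfolding rref_prop_def by simp
    ultimately show ?thesis by (intro exI[of _ "[]"] exI[of _ "\<lambda>_. 0"]) simp
  next
    case False
    obtain m where m: "m \<in> T" "\<forall>x\<in>T. x \<noteq> m \<longrightarrow> R m x"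
      using least_exists[OF tr tot less.prems(1) False] by blast
    define T' where "T' = T - {m}"
    have "card T > 0" using m(1) less.prems(1) card_gt_0_iff by blast
    then have cardT': "card T' < card T" unfolding T'_def using m(1) less.prems(1)
      by simp
    have finT': "finite T'" unfolding T'_def using less.prems(1) by simp
    show ?thesis
    proof (cases "\<exists>x\<in>set xs. lk x m \<noteq> 0")
      case False
      have "\<forall>x\<in>set xs. ks x \<subseteq> T'"
      proof
        fix x assume x: "x \<in> set xs"
        then have "m \<notin> ks x" using False by (simp add: in_keys_iff)
        then show "ks x \<subseteq> T'" using x less.prems(2) unfolding T'_def by blast
      qed
      from less.hyps[OF cardT' finT' this] obtain ps piv where
        ps1: "kspan (set ps) = kspan (set xs)" and ps2: "\<forall>p\<in>set ps. ks p \<subseteq> T'" and ps3: "rref_prop R ps piv" by blast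
      have "\<forall>p\<in>set ps. ks p \<subseteq> T" using ps2 unfolding T'_def by blast
      then show ?thesis using ps1 ps3 by blast
    next
      case True
      then obtain x0 where x0: "x0 \<in> set xs" "lk x0 m \<noteq> 0" by blast
      define a where "a = lk x0 m"
      define p0 where "p0 = smul (1/a) x0"
      have p0m: "lk p0 m = 1" unfolding p0_def a_def using x0 by simp
      define xs' where "xs' = map (\<lambda>x. x - smul (lk x m) p0) xs"
      have "\<forall>x\<in>set xs'. ks x \<subseteq> T'"
      proof
        fix y assume "y \<in> set xs'"
        then obtain x where x: "x \<in> set xs" "y = x - smul (lk x m) p0" unfolding xs'_def by auto
        have "ks p0 \<subseteq> T" unfolding p0_def using less.prems(2) x0(1) keys_smul_sub by blast
        then have "ks y \<subseteq> T" using x less.prems(2) keys_diff[of x "smul (lk x m) p0"] keys_smul_sub[of "lk x m" p0] by blast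
        moreover have "lk y m = 0" using x p0m by (simp add: lookup_minus)
        ultimately show "ks y \<subseteq> T'" unfolding T'_def by (auto simp: in_keys_iff)
      qed
      from less.hyps[OF cardT' finT' this] obtain ps' piv' where
        sp': "kspan (set ps') = kspan (set xs')" and kp': "\<forall>p\<in>set ps'. ks p \<subseteq> T'" and
        rp': "rref_prop R ps' piv'" by blast
      define p1 where "p1 = p0 - (\<Sum>i<length ps'. smul (lk p0 (piv' i)) (ps'!i))"
      have piv'T': "piv' i \<in> T'" if "i < length ps'" for i
      proof -
        have "piv' i \<in> ks (ps'!i)" using rref_D(2)[OF rp' that] .
        moreover have "ks (ps'!i) \<subseteq> T'" using kp' that by simp
        ultimately show ?thesis by blast
      qed
      have ps'm: "lk (ps'!i) m = 0" if "i < length ps'" for i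
      proof -
        have "ks (ps'!i) \<subseteq> T'" using kp' that by simp
        then have "m \<notin> ks (ps'!i)" unfolding T'_def by blast
        then show ?thesis by (simp add: in_keys_iff)
      qed
      have p1m: "lk p1 m = 1" unfolding p1_def using p0m ps'm by (simp add: lookup_minus lookup_sum)
      have r1: "ps'!i \<noteq> 0" if "i < length ps'" for i using rref_D(1)[OF rp' that] .
      have r2: "piv' i \<in> ks (ps'!i)" if "i < length ps'" for i using rref_D(2)[OF rp' that] .
      have r3: "R (piv' i) s" if "i < length ps'" "s \<in> ks (ps'!i)" "s \<noteq> piv' i" for i s
        using rref_D(4)[OF rp' that(1) that(2,3)] .
      have r4: "lk (ps'!i) (piv' i) = 1" if "i < length ps'" for i using rref_D(3)[OF rp' that] .
      have r5: "R (piv' i) (piv' j)" if "i < j" "j < length ps'" for i j using rref_D2[OF rp' that] .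
      have r6: "lk (ps'!j) (piv' i) = 0" if "i < length ps'" "j < length ps'" "i \<noteq> j" for i j
        using rref_D3[OF rp' that] .
      have p1piv: "lk p1 (piv' j) = 0" if "j < length ps'" for j
      proof -
        have "(\<Sum>i<length ps'. lk p0 (piv' i) * lk (ps'!i) (piv' j)) =
              (\<Sum>i<length ps'. if i = j then lk p0 (piv' j) else 0)"
        proof (intro sum.cong refl)
          fix i assume "i \<in> {..<length ps'}"
          then show "lk p0 (piv' i) * lk (ps'!i) (piv' j) = (if i = j then lk p0 (piv' j) else 0)"
            using r4[of i] r6[of j i] that by (cases "i = j") auto
        qed
        also have "\<dots> = lk p0 (piv' j)" using that by simp
        finally show ?thesis unfolding p1_def by (simp add: lookup_minus lookup_sum)
      qed
      have p0sp: "p0 \<in> kspan (set xs)" unfolding p0_def using x0(1) by (simp add: M.span_base M.span_scale)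
      have xs'sp: "set xs' \<subseteq> kspan (set xs)"
      proof
        fix y assume "y \<in> set xs'"
        then obtain x where x: "x \<in> set xs" "y = x - smul (lk x m) p0" unfolding xs'_def by auto
        have "x \<in> kspan (set xs)" using x(1) by (rule M.span_base)
        moreover have "smul (lk x m) p0 \<in> kspan (set xs)" using p0sp by (rule M.span_scale)
        ultimately show "y \<in> kspan (set xs)" unfolding x(2) by (rule M.span_diff)
      qed
      have spsub: "kspan (set xs') \<subseteq> kspan (set xs)" by (rule M.span_minimal[OF xs'sp M.subspace_span])
      have ps'sp: "set ps' \<subseteq> kspan (set xs)"
        using sp' spsub M.span_superset[of "set ps'"] by blast
      have spsub2: "kspan (set ps') \<subseteq> kspan (set xs)" by (rule M.span_minimal[OF ps'sp M.subspace_span])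
      have sumsp: "(\<Sum>i<length ps'. smul (lk p0 (piv' i)) (ps'!i)) \<in> kspan (set ps')"
        by (intro M.span_sum M.span_scale M.span_base) simp
      have p1sp: "p1 \<in> kspan (set xs)" unfolding p1_def
        using sumsp spsub2 p0sp by (blast intro: M.span_diff)
      have p0sp2: "p0 \<in> kspan (set (p1 # ps'))"
      proof -
        have p0eq: "p0 = p1 + (\<Sum>i<length ps'. smul (lk p0 (piv' i)) (ps'!i))" unfolding p1_def by simp
        moreover have "kspan (set ps') \<subseteq> kspan (set (p1 # ps'))" by (rule M.span_mono) auto
        moreover have "p1 \<in> kspan (set (p1 # ps'))" by (rule M.span_base) simp
        ultimately have "p1 + (\<Sum>i<length ps'. smul (lk p0 (piv' i)) (ps'!i)) \<in> kspan (set (p1 # ps'))"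
          using sumsp by (blast intro: M.span_add)
        then show ?thesis using p0eq by simp
      qed
      have xssp: "set xs \<subseteq> kspan (set (p1 # ps'))"
      proof
        fix x assume x: "x \<in> set xs"
        have "x - smul (lk x m) p0 \<in> set xs'" unfolding xs'_def using x by auto
        then have "x - smul (lk x m) p0 \<in> kspan (set ps')" using sp' M.span_superset by blast
        moreover have "kspan (set ps') \<subseteq> kspan (set (p1 # ps'))" by (rule M.span_mono) auto
        ultimately have "(x - smul (lk x m) p0) + smul (lk x m) p0 \<in> kspan (set (p1 # ps'))"
          using p0sp2 by (blast intro: M.span_add M.span_scale)
        then show "x \<in> kspan (set (p1 # ps'))" by simp
      qed
      have span_eq: "kspan (set (p1 # ps')) = kspan (set xs)"
        unfolding M.span_eq using xssp p1sp ps'sp by auto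
      have kT: "\<forall>p\<in>set (p1 # ps'). ks p \<subseteq> T"
      proof -
        have sub: "set xs \<subseteq> {p. ks p \<subseteq> T}" using less.prems(2) by auto
        have "kspan (set xs) \<subseteq> {p. ks p \<subseteq> T}" by (rule M.span_minimal[OF sub keys_sub_subspace])
        then show ?thesis using span_eq M.span_superset by blast
      qed
      define piv where "piv = (\<lambda>i. if i = 0 then m else piv' (i - 1))"
      have "rref_prop R (p1 # ps') piv"
        unfolding rref_prop_def
      proof (intro conjI allI impI ballI)
        fix p assume "p \<in> set (p1 # ps')" then show "p \<noteq> 0"
          using p1m r1 by (auto simp: in_set_conv_nth)
      next
        fix i assume i: "i < length (p1 # ps')"
        show "piv i \<in> ks ((p1 # ps') ! i)"
        proof (cases i)
          case 0 then show ?thesis using p1m unfolding piv_def by (simp add: in_keys_iff)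
        next
          case (Suc k) then show ?thesis using r2[of k] i unfolding piv_def by simp
        qed
        show "lk ((p1 # ps') ! i) (piv i) = 1"
        proof (cases i)
          case 0 then show ?thesis using p1m unfolding piv_def by simp
        next
          case (Suc k) then show ?thesis using r4[of k] i unfolding piv_def by simp
        qed
        fix s assume s: "s \<in> ks ((p1 # ps') ! i)" "s \<noteq> piv i"
        show "R (piv i) s"
        proof (cases i)
          case 0
          then have "s \<in> ks p1" "s \<noteq> m" using s unfolding piv_def by simp_all
          then have "s \<in> T" using kT by auto
          then show ?thesis using 0 m \<open>s \<noteq> m\<close> unfolding piv_def by simp
        next
          case (Suc k) then show ?thesis using s r3[of k s] i unfolding piv_def by simp
        qed
      next
        fix i j assume ij: "i < j \<and> j < length (p1 # ps')"
        then obtain l where l: "j = Suc l" by (cases j) auto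
        show "R (piv i) (piv j)"
        proof (cases i)
          case 0
          have "piv' l \<in> T'" using ij l piv'T' by simp
          then show ?thesis using 0 l m unfolding piv_def T'_def by simp
        next
          case (Suc k)
          then show ?thesis using r5[of k l] ij l unfolding piv_def by simp
        qed
      next
        fix i j assume ij: "i < length (p1 # ps') \<and> j < length (p1 # ps') \<and> i \<noteq> j"
        show "lk ((p1 # ps') ! j) (piv i) = 0"
        proof (cases i)
          case 0 then obtain k where "j = Suc k" using ij by (cases j) auto
          then show ?thesis using 0 ij ps'm[of k] unfolding piv_def by simp
        next
          case (Suc k) note ik = this
          show ?thesis
          proof (cases j)
            case 0 then show ?thesis using ik ij p1piv[of k] unfolding piv_def by simp
          next
            case (Suc l) then show ?thesis using ik ij r6[of k l] unfolding piv_def by simp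
          qed
        qed
      qed
      then show ?thesis using span_eq kT by blast
    qed
  qed
qed

lemma is_term_add: "is_term n a \<Longrightarrow> is_term n b \<Longrightarrow> is_term n (a + b)"
  unfolding is_term_def using keys_add[of a b] by blast

lemma is_term_zero[simp]: "is_term n 0" unfolding is_term_def by simp

lemma in_P_zero[simp]: "in_P n 0" unfolding in_P_def by simp

lemma in_P_add: "in_P n f \<Longrightarrow> in_P n g \<Longrightarrow> in_P n (f + g)"
  unfolding in_P_def using keys_add[of f g] by blast

lemma in_P_mult: "in_P n f \<Longrightarrow> in_P n g \<Longrightarrow> in_P n (f * g)"
  unfolding in_P_def using keys_mult[of f g] is_term_add by blast

lemma in_P_single0: "in_P n (Poly_Mapping.single 0 c)" unfolding in_P_def by simp

lemma in_P_one: "in_P n 1" unfolding in_P_def by simp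

lemma keys_var_term: "ks (var_term i) = {i}" unfolding var_term_def by simp

lemma keys_var: "ks (var i :: 'a::{zero_neq_one} mpoly) = {var_term i}" unfolding var_def by simp

lemma is_term_var: "i < n \<Longrightarrow> is_term n (var_term i)" unfolding is_term_def keys_var_term by simp

lemma in_P_var: "i < n \<Longrightarrow> in_P n (var i :: 'a::{zero_neq_one} mpoly)"
  unfolding in_P_def keys_var using is_term_var by simp

lemma in_P_sum: "(\<And>i. i \<in> I \<Longrightarrow> in_P n (f i)) \<Longrightarrow> in_P n (sum f I)"
  unfolding in_P_def using keys_sum[of f I] by blast

lemma ideal_in_P:
  assumes "\<forall>g\<in>set gs. in_P n g" "G \<in> ideal_P n gs"
  shows "in_P n G"
proof -
  obtain hs where hs: "G = (\<Sum>i<length gs. hs ! i * gs ! i)" "length hs = length gs" "\<forall>h\<in>set hs. in_P n h"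
    using assms(2) unfolding ideal_P_def by blast
  show ?thesis unfolding hs(1)
    by (rule in_P_sum, rule in_P_mult) (use hs assms(1) in auto)
qed

lemma ideal_add:
  assumes "F \<in> ideal_P n gs" "G \<in> ideal_P n gs" shows "F + G \<in> ideal_P n gs"
proof -
  obtain hs where hs: "F = (\<Sum>i<length gs. hs ! i * gs ! i)" "length hs = length gs" "\<forall>h\<in>set hs. in_P n h"
    using assms(1) unfolding ideal_P_def by blast
  obtain ks where ks: "G = (\<Sum>i<length gs. ks ! i * gs ! i)" "length ks = length gs" "\<forall>h\<in>set ks. in_P n h"
    using assms(2) unfolding ideal_P_def by blast
  define ls where "ls = map (\<lambda>i. hs ! i + ks ! i) [0..<length gs]"
  have "F + G = (\<Sum>i<length gs. ls ! i * gs ! i)"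
    unfolding hs(1) ks(1) ls_def sum.distrib[symmetric] by (intro sum.cong) (auto simp: algebra_simps)
  moreover have "\<forall>h\<in>set ls. in_P n h" unfolding ls_def using hs ks by (auto intro!: in_P_add)
  moreover have "length ls = length gs" unfolding ls_def by simp
  ultimately show ?thesis unfolding ideal_P_def by blast
qed

lemma ideal_mult:
  assumes "G \<in> ideal_P n gs" "in_P n q" shows "q * G \<in> ideal_P n gs"
proof -
  obtain ks where ks: "G = (\<Sum>i<length gs. ks ! i * gs ! i)" "length ks = length gs" "\<forall>h\<in>set ks. in_P n h"
    using assms(1) unfolding ideal_P_def by blast
  define ls where "ls = map (\<lambda>i. q * ks ! i) [0..<length gs]"
  have "q * G = (\<Sum>i<length gs. ls ! i * gs ! i)"
    unfolding ks(1) ls_def sum_distrib_left by (intro sum.cong) (auto simp: algebra_simps)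
  moreover have "\<forall>h\<in>set ls. in_P n h" unfolding ls_def using ks assms(2) by (auto intro!: in_P_mult)
  moreover have "length ls = length gs" unfolding ls_def by simp
  ultimately show ?thesis unfolding ideal_P_def by blast
qed

lemma ideal_gen:
  fixes gs :: "'a::field mpoly list"
  assumes "k < length gs" shows "gs ! k \<in> ideal_P n gs"
proof -
  define ls :: "'a mpoly list" where "ls = map (\<lambda>i. if i = k then 1 else 0) [0..<length gs]"
  have "(\<Sum>i<length gs. ls ! i * gs ! i) = (\<Sum>i<length gs. if i = k then gs ! k else 0)"
    unfolding ls_def by (intro sum.cong) auto
  also have "\<dots> = gs ! k" using assms by simp
  finally have "gs ! k = (\<Sum>i<length gs. ls ! i * gs ! i)" by simp
  moreover have "\<forall>h\<in>set ls. in_P n h" unfolding ls_def by (auto simp: in_P_one)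
  moreover have "length ls = length gs" unfolding ls_def by simp
  ultimately show ?thesis unfolding ideal_P_def by blast
qed

lemma ideal_zero: "0 \<in> ideal_P n (gs :: 'a::field mpoly list)"
proof -
  define ls :: "'a mpoly list" where "ls = map (\<lambda>i. 0) [0..<length gs]"
  have "(0::'a mpoly) = (\<Sum>i<length gs. ls ! i * gs ! i)" unfolding ls_def by simp
  moreover have "\<forall>h\<in>set ls. in_P n h" unfolding ls_def by auto
  moreover have "length ls = length gs" unfolding ls_def by simp
  ultimately show ?thesis unfolding ideal_P_def by blast
qed

lemma ideal_smul: "G \<in> ideal_P n gs \<Longrightarrow> smul c G \<in> ideal_P n (gs :: 'a::field mpoly list)"
  unfolding smul_eq by (rule ideal_mult) (simp_all add: in_P_single0)

lemma ideal_subspace: "M.subspace (ideal_P n (gs :: 'a::field mpoly list))"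
  by (rule M.subspaceI) (auto intro: ideal_zero ideal_add ideal_smul)

lemma var_term_inj: "var_term i = var_term j \<Longrightarrow> i = j"
  unfolding var_term_def by (metis lookup_single_eq lookup_single_not_eq zero_neq_one)

lemma col_trans:
  assumes dZ: "distinct Z" and a: "col_before Z a b" and b: "col_before Z b c"
  shows "col_before Z a c"
proof -
  let ?V = "var_term ` set Z"
  have c1: "col_before Z a c" if "k < l" "l < length Z" "a = var_term (Z!k)" "c = var_term (Z!l)" for k l
    unfolding col_before_def using that by blast
  show ?thesis
  proof (cases "b \<in> ?V")
    case True
    then have "a \<in> ?V \<and> (\<exists>k l. k < l \<and> l < length Z \<and> a = var_term (Z ! k) \<and> b = var_term (Z ! l))"
      using a unfolding col_before_def by auto
    then obtain k l where kl: "k < l" "l < length Z" "a = var_term (Z ! k)" "b = var_term (Z ! l)" by blast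
    have aV: "a \<in> ?V" using kl by auto
    show ?thesis
    proof (cases "c \<in> ?V")
      case True
      then obtain l' m where lm: "l' < m" "m < length Z" "b = var_term (Z ! l')" "c = var_term (Z ! m)"
        using b unfolding col_before_def by auto
      have "Z ! l = Z ! l'" using kl(4) lm(3) var_term_inj by metis
      then have "l = l'" using dZ kl lm nth_eq_iff_index_eq by (metis order.strict_trans)
      then show ?thesis using c1[of k m] kl lm by simp
    next
      case False then show ?thesis using aV unfolding col_before_def by blast
    qed
  next
    case False
    then have bc: "c \<notin> ?V \<and> lex_gt b c" using b unfolding col_before_def by auto
    show ?thesis
    proof (cases "a \<in> ?V")
      case True then show ?thesis using bc unfolding col_before_def by blast
    next
      case False
      then have "lex_gt a b" using a \<open>b \<notin> ?V\<close> unfolding col_before_def by auto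
      then show ?thesis using bc False lex_trans unfolding col_before_def by blast
    qed
  qed
qed

lemma col_total:
  assumes "a \<noteq> b" shows "col_before Z a b \<or> col_before Z b a"
proof (cases "a \<in> var_term ` set Z \<and> b \<in> var_term ` set Z")
  case True
  then obtain k l where kl: "k < length Z" "l < length Z" "a = var_term (Z!k)" "b = var_term (Z!l)"
    by (metis imageE in_set_conv_nth)
  then have "k \<noteq> l" using assms by auto
  then show ?thesis using kl unfolding col_before_def
    by (cases "k < l") (blast, metis linorder_neqE_nat)
next
  case False
  then show ?thesis using lex_total[OF assms] unfolding col_before_def by blast
qed

lemma rref_indep:
  assumes rp: "rref_prop R ps piv"
  shows "kindependent (set (ps :: 'a::field mpoly list))"
  unfolding M.independent_explicit_module
proof (intro allI impI)
  fix t u v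
  assume t: "finite t" "t \<subseteq> set ps" and s0: "(\<Sum>v\<in>t. smul (u v) v) = 0" and v: "v \<in> t"
  obtain i where i: "i < length ps" "v = ps ! i" using v t(2) by (metis in_set_conv_nth subsetD)
  have "lk (\<Sum>v\<in>t. smul (u v) v) (piv i) = 0" using s0 by simp
  then have "(\<Sum>v'\<in>t. u v' * lk v' (piv i)) = 0" by (simp add: lookup_sum)
  moreover have "(\<Sum>v'\<in>t. u v' * lk v' (piv i)) = u v * lk v (piv i) + (\<Sum>v'\<in>t - {v}. u v' * lk v' (piv i))"
    using t(1) v by (rule sum.remove)
  moreover have "(\<Sum>v'\<in>t - {v}. u v' * lk v' (piv i)) = 0"
  proof (rule sum.neutral, rule ballI)
    fix v' assume v': "v' \<in> t - {v}"
    then obtain j where j: "j < length ps" "v' = ps ! j" using t(2) by (metis DiffD1 in_set_conv_nth subsetD)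
    then have "i \<noteq> j" using v' i by auto
    then show "u v' * lk v' (piv i) = 0" using rref_D3[OF rp i(1) j(1)] j by simp
  qed
  moreover have "lk v (piv i) = 1" using rref_D(3)[OF rp i(1)] i by simp
  ultimately show "u v = 0" by simp
qed

lemma is_LT_unique:
  assumes "\<forall>x. \<not> tau x x" "\<forall>x y z. tau x y \<longrightarrow> tau y z \<longrightarrow> tau x z"
    "is_LT tau p t" "is_LT tau p t'"
  shows "t = t'"
  using assms unfolding is_LT_def by metis

lemma rref_LI:
  assumes "kspan (set ps) = kspan (set xs)" "rref_prop (col_before Z) ps piv"
  shows "LI Z xs ps"
proof -
  have a: "\<forall>p\<in>set ps. p \<noteq> 0" using assms(2) unfolding rref_prop_def by blast
  have b: "\<forall>i<length ps. is_pivot Z (ps ! i) (piv i) \<and> lk (ps ! i) (piv i) = 1"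
    using rref_D[OF assms(2)] unfolding is_pivot_def by blast
  have c: "\<forall>i j. i < j \<and> j < length ps \<longrightarrow> col_before Z (piv i) (piv j)" using rref_D2[OF assms(2)] by blast
  have d: "\<forall>i j. i < length ps \<and> j < length ps \<and> i \<noteq> j \<longrightarrow> lk (ps ! j) (piv i) = 0"
    using rref_D3[OF assms(2)] by blast
  show ?thesis unfolding LI_def
    by (intro conjI assms(1) a exI[of _ piv] b c d)
qed

lemma step_i_exists:
  fixes gs :: "'a::field mpoly list"
  assumes dZ: "distinct Z"
  shows "\<exists>gs'. step_i n \<delta> gs Z gs'"
proof -
  define H :: "'a mpoly list" where "H = [var i * g. i \<leftarrow> [0..<n], i \<notin> set Z, g \<leftarrow> gs]"
  define tau where "tau = ordW (wdeg (replicate n 1))"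
  have tauo: "term_order n tau" unfolding tau_def by (rule ordW_term_order) (rule wdeg_add)
  have taud: "degree_compatible n tau" unfolding tau_def by (rule deg_comp_ordW)
  have tirr: "\<forall>x. \<not> tau x x" unfolding tau_def using ordW_irrefl by blast
  have ttr: "\<forall>x y z. tau x y \<longrightarrow> tau y z \<longrightarrow> tau x z" unfolding tau_def using ordW_trans by blast
  have ttot: "\<forall>x y. x \<noteq> y \<longrightarrow> tau x y \<or> tau y x" unfolding tau_def using ordW_total by blast
  define R1 where "R1 = (\<lambda>a b. tau b a)"
  have r1tr: "\<forall>x y z. R1 x y \<longrightarrow> R1 y z \<longrightarrow> R1 x z" unfolding R1_def using ttr by blast
  have r1tot: "\<forall>x y. x \<noteq> y \<longrightarrow> R1 x y \<or> R1 y x" unfolding R1_def using ttot by blast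
  have f1: "finite (\<Union>h\<in>set H. ks h)" by simp
  have s1: "\<forall>x\<in>set H. ks x \<subseteq> (\<Union>h\<in>set H. ks h)" by blast
  obtain hs piv where hs1: "kspan (set hs) = kspan (set H)" and hs3: "rref_prop R1 hs piv"
    using rref_exists[OF r1tr r1tot f1 s1] by blast
  have LT: "is_LT tau (hs!i) (piv i)" if "i < length hs" for i
    unfolding is_LT_def using rref_D(2,4)[OF hs3 that] unfolding R1_def by blast
  have dist: "distinct hs"
    unfolding distinct_conv_nth
  proof (intro allI impI)
    fix i j assume ij: "i < length hs" "j < length hs" "i \<noteq> j"
    show "hs ! i \<noteq> hs ! j"
    proof
      assume "hs ! i = hs ! j"
      then have "lk (hs!j) (piv i) = 1" using rref_D(3)[OF hs3 ij(1)] by simp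
      then show False using rref_D3[OF hs3 ij] by simp
    qed
  qed
  have ind: "kindependent (set hs)" by (rule rref_indep[OF hs3])
  have dLT: "\<forall>i j. i < j \<and> j < length hs \<longrightarrow> \<not> (\<exists>t. is_LT tau (hs ! i) t \<and> is_LT tau (hs ! j) t)"
  proof (intro allI impI notI)
    fix i j assume ij: "i < j \<and> j < length hs" and "\<exists>t. is_LT tau (hs ! i) t \<and> is_LT tau (hs ! j) t"
    then obtain t where t: "is_LT tau (hs ! i) t" "is_LT tau (hs ! j) t" by blast
    have "t = piv i" using is_LT_unique[OF tirr ttr t(1) LT] ij by simp
    moreover have "t = piv j" using is_LT_unique[OF tirr ttr t(2) LT] ij by simp
    moreover have "R1 (piv i) (piv j)" using rref_D2[OF hs3] ij by blast
    ultimately show False unfolding R1_def using tirr by simp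
  qed
  have eLT: "\<forall>i<length hs. \<exists>t. is_LT tau (hs ! i) t" using LT by blast
  define xs2 where "xs2 = gs @ filter (\<lambda>h. pdeg h \<le> \<delta>) hs"
  have c2tr: "\<forall>x y z. col_before Z x y \<longrightarrow> col_before Z y z \<longrightarrow> col_before Z x z"
    using col_trans[OF dZ] by blast
  have c2tot: "\<forall>x y. x \<noteq> y \<longrightarrow> col_before Z x y \<or> col_before Z y x" using col_total by blast
  have f2: "finite (\<Union>h\<in>set xs2. ks h)" by simp
  have s2: "\<forall>x\<in>set xs2. ks x \<subseteq> (\<Union>h\<in>set xs2. ks h)" by blast
  obtain ps piv2 where ps1: "kspan (set ps) = kspan (set xs2)" and ps3: "rref_prop (col_before Z) ps piv2"
    using rref_exists[OF c2tr c2tot f2 s2] by blast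
  have li: "LI Z xs2 ps" by (rule rref_LI[OF ps1 ps3])
  have "step_i n \<delta> gs Z ps"
    unfolding step_i_def Let_def H_def[symmetric] xs2_def[symmetric]
    by (intro exI[of _ tau] exI[of _ hs] conjI tauo taud dist ind hs1 dLT eLT li[unfolded xs2_def])
  then show ?thesis by blast
qed

definition wsum :: "(nat \<Rightarrow> nat) \<Rightarrow> monom \<Rightarrow> nat" where
  "wsum w t = (\<Sum>i\<in>ks t. w i * lk t i)"

lemma wsum_superset: "finite A \<Longrightarrow> ks t \<subseteq> A \<Longrightarrow> wsum w t = (\<Sum>i\<in>A. w i * lk t i)"
  unfolding wsum_def by (intro sum.mono_neutral_left) (auto simp: in_keys_iff)

lemma wsum_add: "wsum w (s + t) = wsum w s + wsum w t"
proof -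
  let ?A = "ks s \<union> ks t"
  have "wsum w (s + t) = (\<Sum>i\<in>?A. w i * lk (s + t) i)" using keys_add[of s t] by (intro wsum_superset) auto
  also have "\<dots> = (\<Sum>i\<in>?A. w i * lk s i) + (\<Sum>i\<in>?A. w i * lk t i)"
    by (simp add: lookup_add algebra_simps sum.distrib)
  also have "\<dots> = wsum w s + wsum w t" by (subst (1 2) wsum_superset[of ?A]) auto
  finally show ?thesis .
qed

lemma wsum_var_term: "wsum w (var_term i) = w i"
  unfolding wsum_def keys_var_term by (simp add: var_term_def)

lemma wsum_cong: "(\<And>i. i \<in> ks t \<Longrightarrow> w i = w' i) \<Longrightarrow> wsum w t = wsum w' t"
  unfolding wsum_def by (rule sum.cong) auto

lemma wsum_bound: "(\<And>i. i \<in> ks t \<Longrightarrow> w i \<le> c) \<Longrightarrow> wsum w t \<le> c * tdeg t"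
  unfolding wsum_def tdeg_def sum_distrib_left by (rule sum_mono) simp

lemma wdeg_map: "ks t \<subseteq> {..<n} \<Longrightarrow> wdeg (map w [0..<n]) t = wsum w t"
proof -
  assume a: "ks t \<subseteq> {..<n}"
  have "wdeg (map w [0..<n]) t = (\<Sum>i<n. w i * lk t i)" unfolding wdeg_def by (intro sum.cong) auto
  also have "\<dots> = wsum w t" using a by (intro wsum_superset[symmetric]) auto
  finally show ?thesis .
qed

lemma lookup_restrictZ: "lk (restrictZ Z p) t = (if (\<exists>z\<in>Z. 0 < lk t z) then lk p t else 0)"
  unfolding restrictZ_def by (simp add: lookup_mapp when_def in_keys_iff)

lemma keys_restrictZ: "ks (restrictZ Z p) \<subseteq> ks p"
  unfolding restrictZ_def by (rule keys_mapp_subset)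

lemma keys_restrict_diff: "t \<in> ks (p - restrictZ Z p) \<Longrightarrow> t \<in> ks p \<and> (\<forall>y\<in>Z. lk t y = 0)"
  by (auto simp: in_keys_iff lookup_minus lookup_restrictZ split: if_splits)

definition good :: "nat \<Rightarrow> 'a::field mpoly list \<Rightarrow> nat set \<Rightarrow> (nat \<Rightarrow> nat) \<Rightarrow> nat \<Rightarrow> 'a mpoly \<Rightarrow> bool" where
  "good n gs Zs w B p \<longleftrightarrow> (\<exists>G. G \<in> ideal_P n gs \<and> (\<forall>t\<in>ks (G - p). (\<forall>y\<in>Zs. lk t y = 0) \<and> wsum w t \<le> B))"

lemma smul_diff: "smul c (a - b) = smul c a - smul c (b :: 'a::field mpoly)"
  by (rule poly_mapping_eqI) (simp add: lookup_minus algebra_simps)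

lemma good_subspace: "M.subspace {p. good n gs Zs w B p}"
proof (rule M.subspaceI)
  show "0 \<in> {p. good n gs Zs w B p}" unfolding good_def using ideal_zero by force
next
  fix x y assume "x \<in> {p. good n gs Zs w B p}" "y \<in> {p. good n gs Zs w B p}"
  then obtain G1 G2 where g1: "G1 \<in> ideal_P n gs" "\<forall>t\<in>ks (G1 - x). (\<forall>y\<in>Zs. lk t y = 0) \<and> wsum w t \<le> B"
    and g2: "G2 \<in> ideal_P n gs" "\<forall>t\<in>ks (G2 - y). (\<forall>y\<in>Zs. lk t y = 0) \<and> wsum w t \<le> B"
    unfolding good_def by blast
  have e: "(G1 + G2) - (x + y) = (G1 - x) + (G2 - y)" by simp
  have "ks ((G1 + G2) - (x + y)) \<subseteq> ks (G1 - x) \<union> ks (G2 - y)" unfolding e by (rule keys_add)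
  then have "\<forall>t\<in>ks ((G1 + G2) - (x + y)). (\<forall>y\<in>Zs. lk t y = 0) \<and> wsum w t \<le> B" using g1(2) g2(2) by blast
  moreover have "G1 + G2 \<in> ideal_P n gs" using g1(1) g2(1) by (rule ideal_add)
  ultimately show "x + y \<in> {p. good n gs Zs w B p}" unfolding good_def by blast
next
  fix c x assume "x \<in> {p. good n gs Zs w B p}"
  then obtain G where g: "G \<in> ideal_P n gs" "\<forall>t\<in>ks (G - x). (\<forall>y\<in>Zs. lk t y = 0) \<and> wsum w t \<le> B"
    unfolding good_def by blast
  have "ks (smul c G - smul c x) \<subseteq> ks (G - x)" unfolding smul_diff[symmetric] by (rule keys_smul_sub)
  then have "\<forall>t\<in>ks (smul c G - smul c x). (\<forall>y\<in>Zs. lk t y = 0) \<and> wsum w t \<le> B" using g(2) by blast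
  moreover have "smul c G \<in> ideal_P n gs" using g(1) by (rule ideal_smul)
  ultimately show "smul c x \<in> {p. good n gs Zs w B p}" unfolding good_def by blast
qed

lemma good_mono: assumes "good n gs Zs w B p" "B \<le> B'" shows "good n gs Zs w B' p"
proof -
  obtain G where G: "G \<in> ideal_P n gs" "\<forall>t\<in>ks (G - p). (\<forall>y\<in>Zs. lk t y = 0) \<and> wsum w t \<le> B"
    using assms(1) unfolding good_def by blast
  have "\<forall>t\<in>ks (G - p). (\<forall>y\<in>Zs. lk t y = 0) \<and> wsum w t \<le> B'" using G(2) assms(2) le_trans by blast
  then show ?thesis unfolding good_def using G(1) by blast
qed

lemma keys_var_mult: "ks (var i * J :: 'a::field mpoly) \<subseteq> {var_term i + t | t. t \<in> ks J}"
  using keys_mult[of "var i" J] unfolding keys_var by blast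

lemma lookup_var_term: "lk (var_term i) y = (if y = i then 1 else 0)"
  unfolding var_term_def by (simp add: lookup_single)

lemma good_mult_var:
  assumes g: "good n gs Zs w B p" and i: "i < n" "i \<notin> Zs" and B: "w i + B \<le> B'"
  shows "good n gs Zs w B' (var i * p)"
proof -
  obtain G where G: "G \<in> ideal_P n gs" "\<forall>t\<in>ks (G - p). (\<forall>y\<in>Zs. lk t y = 0) \<and> wsum w t \<le> B"
    using g unfolding good_def by blast
  have e: "var i * G - var i * p = var i * (G - p)" by (simp add: right_diff_distrib)
  have "\<forall>t'\<in>ks (var i * G - var i * p). (\<forall>y\<in>Zs. lk t' y = 0) \<and> wsum w t' \<le> B'"
  proof
    fix t' assume "t' \<in> ks (var i * G - var i * p)"
    then obtain t where t: "t' = var_term i + t" "t \<in> ks (G - p)" using keys_var_mult[of i "G - p"] unfolding e by blast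
    have "\<forall>y\<in>Zs. lk t' y = 0" using t G(2) i(2) by (auto simp: lookup_add lookup_var_term)
    moreover have "wsum w t \<le> B" using t G(2) by blast
    then have "wsum w t' \<le> B'" using t B by (simp add: wsum_add wsum_var_term)
    ultimately show "(\<forall>y\<in>Zs. lk t' y = 0) \<and> wsum w t' \<le> B'" by blast
  qed
  moreover have "var i * G \<in> ideal_P n gs" using G(1) in_P_var[OF i(1)] by (rule ideal_mult)
  ultimately show ?thesis unfolding good_def by blast
qed

definition lowdeg :: "nat \<Rightarrow> 'a::zero mpoly \<Rightarrow> bool" where
  "lowdeg \<delta> p \<longleftrightarrow> ks p \<subseteq> {t. tdeg t \<le> \<delta>}"

definition found :: "nat \<Rightarrow> 'a::field mpoly list \<Rightarrow> nat set \<Rightarrow> (nat \<Rightarrow> nat) \<Rightarrow> nat \<Rightarrow> bool" where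
  "found n gs Zs w z \<longleftrightarrow> (\<exists>J. var z + J \<in> ideal_P n gs \<and>
      (\<forall>t\<in>ks J. (\<forall>y\<in>Zs. lk t y = 0) \<and> lk t z = 0 \<and> wsum w t < w z))"

definition final :: "nat \<Rightarrow> 'a::field mpoly list \<Rightarrow> nat list \<Rightarrow> nat list \<Rightarrow> bool" where
  "final n gs Z W \<longleftrightarrow> length W = n \<and>
          (\<exists>fs. length fs = length Z \<and> set fs \<subseteq> ideal_P n gs \<and> Z_separating n Z fs \<and>
                (\<forall>lt. term_order n lt \<and> W_compatible n W lt \<longrightarrow>
                      (\<forall>i<length Z. is_LT lt (fs ! i) (var_term (Z ! i)))))"

lemma found_LT:
  assumes gsP: "\<forall>g\<in>set gs. in_P n g" and z: "z < n"
    and f: "var z + J \<in> ideal_P n gs" and J: "\<forall>t\<in>ks J. lk t z = 0 \<and> wsum w t < w z"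
    and lt: "W_compatible n (map w [0..<n]) lt"
  shows "is_LT lt (var z + J) (var_term z)"
proof -
  have fP: "in_P n (var z + J)" using ideal_in_P[OF gsP f] .
  have nz: "var_term z \<notin> ks J" using J by (auto simp: lookup_var_term)
  have "lk (var z + J) (var_term z) = 1" using nz unfolding var_def by (simp add: lookup_add in_keys_iff)
  then have k: "var_term z \<in> ks (var z + J)" by (simp add: in_keys_iff)
  have "\<forall>s\<in>ks (var z + J). s \<noteq> var_term z \<longrightarrow> lt s (var_term z)"
  proof (intro ballI impI)
    fix s assume s: "s \<in> ks (var z + J)" "s \<noteq> var_term z"
    then have sJ: "s \<in> ks J" using keys_add[of "var z" J] keys_var[of z] by auto
    have ts: "is_term n s" using fP s(1) unfolding in_P_def by blast
    have tz: "is_term n (var_term z)" using z by (rule is_term_var)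
    have "wdeg (map w [0..<n]) s = wsum w s" using ts unfolding is_term_def by (rule wdeg_map)
    also have "\<dots> < w z" using J sJ by blast
    also have "w z = wdeg (map w [0..<n]) (var_term z)"
      using tz unfolding is_term_def by (simp add: wdeg_map wsum_var_term)
    finally show "lt s (var_term z)" using lt ts tz unfolding W_compatible_def by blast
  qed
  then show ?thesis unfolding is_LT_def using k by blast
qed

lemma final_from_found:
  assumes gsP: "\<forall>g\<in>set gs. in_P n g" and Zn: "set Z \<subseteq> {..<n}"
    and fd: "\<forall>z\<in>set Z. found n gs {} w z"
  shows "final n gs Z (map w [0..<n])"
proof -
  define W where "W = map w [0..<n]"
  define F where "F = (\<lambda>z. SOME f. f \<in> ideal_P n gs \<and> (\<exists>J. f = var z + J \<and> (\<forall>t\<in>ks J. lk t z = 0 \<and> wsum w t < w z)))"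
  have Fz: "F z \<in> ideal_P n gs \<and> (\<exists>J. F z = var z + J \<and> (\<forall>t\<in>ks J. lk t z = 0 \<and> wsum w t < w z))"
    if "z \<in> set Z" for z
  proof -
    have "found n gs {} w z" using fd that by blast
    then obtain J where J1: "var z + J \<in> ideal_P n gs"
      and J2: "\<forall>t\<in>ks J. (\<forall>y\<in>{}. lk t y = 0) \<and> lk t z = 0 \<and> wsum w t < w z"
      unfolding found_def by blast
    have "\<forall>t\<in>ks J. lk t z = 0 \<and> wsum w t < w z" using J2 by simp
    note J1 this
    then have "\<exists>f. f \<in> ideal_P n gs \<and> (\<exists>J. f = var z + J \<and> (\<forall>t\<in>ks J. lk t z = 0 \<and> wsum w t < w z))" by blast
    then show ?thesis unfolding F_def by (rule someI_ex)
  qed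
  define fs where "fs = map F Z"
  have LT: "is_LT lt (fs ! i) (var_term (Z ! i))" if "W_compatible n W lt" "i < length Z" for lt i
  proof -
    have zi: "Z ! i \<in> set Z" using that(2) by simp
    then obtain J where J: "F (Z!i) = var (Z!i) + J" "\<forall>t\<in>ks J. lk t (Z!i) = 0 \<and> wsum w t < w (Z!i)"
      and I: "F (Z!i) \<in> ideal_P n gs" using Fz by blast
    have zn: "Z!i < n" using zi Zn by blast
    have "is_LT lt (var (Z!i) + J) (var_term (Z!i))"
      by (rule found_LT[OF gsP zn I[unfolded J(1)] J(2) that(1)[unfolded W_def]])
    moreover have "fs ! i = var (Z!i) + J" unfolding fs_def using that(2) J(1) by simp
    ultimately show ?thesis by simp
  qed
  have sep: "Z_separating n Z fs"
    unfolding Z_separating_def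
  proof (intro conjI exI[of _ "ordW (wdeg W)"])
    show "length fs = length Z" unfolding fs_def by simp
    show "term_order n (ordW (wdeg W))" by (rule ordW_term_order) (rule wdeg_add)
    show "\<forall>i<length Z. is_LT (ordW (wdeg W)) (fs ! i) (var_term (Z ! i))"
      using LT[OF W_comp_ordW] by blast
  qed
  have fsI: "set fs \<subseteq> ideal_P n gs"
  proof
    fix f assume "f \<in> set fs"
    then obtain z where "z \<in> set Z" "f = F z" unfolding fs_def by auto
    then show "f \<in> ideal_P n gs" using Fz by blast
  qed
  have len: "length fs = length Z" unfolding fs_def by simp
  have all: "\<forall>lt. term_order n lt \<and> W_compatible n W lt \<longrightarrow> (\<forall>i<length Z. is_LT lt (fs ! i) (var_term (Z ! i)))"
    using LT by blast
  have ex: "\<exists>fs. length fs = length Z \<and> set fs \<subseteq> ideal_P n gs \<and> Z_separating n Z fs \<and>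
     (\<forall>lt. term_order n lt \<and> W_compatible n W lt \<longrightarrow> (\<forall>i<length Z. is_LT lt (fs ! i) (var_term (Z ! i))))"
    using len fsI sep all by blast
  show ?thesis unfolding final_def using ex unfolding W_def by simp
qed

definition INV :: "nat \<Rightarrow> 'a::field mpoly list \<Rightarrow> nat list \<Rightarrow> 'a mpoly oc_config \<Rightarrow> bool" where
  "INV n gs Z0 c = (case c of
     Run L Z w d \<Rightarrow> distinct Z \<and> set Z \<subseteq> set Z0 \<and> (\<forall>k\<in>set Z. w k = 0) \<and> (\<forall>k. 2 * delta gs * w k + 1 \<le> d) \<and>
       (\<forall>p\<in>set L. lowdeg (delta gs) p \<and> good n gs (set Z) w ((d - 1) div 2) p) \<and>
       (\<forall>z\<in>set Z0 - set Z. found n gs (set Z) w z)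
   | Done r \<Rightarrow> (case r of None \<Rightarrow> True | Some W \<Rightarrow> final n gs Z0 W))"

lemma pdeg_ge: "t \<in> ks p \<Longrightarrow> tdeg t \<le> pdeg p"
  unfolding pdeg_def by (rule Max_ge) auto

lemma delta_ge: "g \<in> set gs \<Longrightarrow> pdeg g \<le> delta gs"
  unfolding delta_def by (rule Max_ge) auto

lemma inv_init:
  fixes gs :: "'a::field mpoly list"
  assumes dZ: "distinct Z0"
  shows "INV n gs Z0 (oc_init n gs Z0)"
proof (cases "kdim (kspan (set (map Lin (map (restrictZ (set Z0)) gs)))) < length Z0")
  case True then show ?thesis unfolding oc_init_def Let_def INV_def by simp
next
  case False
  have L: "lowdeg (delta gs) p \<and> good n gs (set Z0) (\<lambda>_. 0) 0 p" if pin: "p \<in> set (map (restrictZ (set Z0)) gs)" for p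
  proof -
    obtain g where g: "g \<in> set gs" "p = restrictZ (set Z0) g" using pin by auto
    have "lowdeg (delta gs) p" unfolding lowdeg_def
    proof
      fix t assume "t \<in> ks p"
      then have "t \<in> ks g" using g(2) keys_restrictZ by blast
      then have "tdeg t \<le> pdeg g" by (rule pdeg_ge)
      also have "\<dots> \<le> delta gs" using g(1) by (rule delta_ge)
      finally show "t \<in> {t. tdeg t \<le> delta gs}" by simp
    qed
    moreover have "good n gs (set Z0) (\<lambda>_. 0) 0 p" unfolding good_def
    proof (intro exI conjI)
      obtain k where "k < length gs" "g = gs ! k" using g(1) by (metis in_set_conv_nth)
      then show "g \<in> ideal_P n gs" using ideal_gen by blast
      show "\<forall>t\<in>ks (g - p). (\<forall>y\<in>set Z0. lk t y = 0) \<and> wsum (\<lambda>_. 0) t \<le> 0"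
      proof
        fix t assume "t \<in> ks (g - p)"
        then have "\<forall>y\<in>set Z0. lk t y = 0" using keys_restrict_diff[of t g "set Z0"] unfolding g(2) by blast
        moreover have "wsum (\<lambda>_. 0) t \<le> 0" unfolding wsum_def by simp
        ultimately show "(\<forall>y\<in>set Z0. lk t y = 0) \<and> wsum (\<lambda>_. 0) t \<le> 0" by blast
      qed
    qed
    ultimately show ?thesis by blast
  qed
  show ?thesis unfolding oc_init_def Let_def INV_def using False L dZ by simp
qed

lemma set_filter_notin: "set (filter (\<lambda>z. z \<notin> A) Z) = set Z - A" by auto

lemma inv_step:
  fixes gs :: "'a::field mpoly list"
  assumes d1: "delta gs \<ge> 1" and gsP: "\<forall>g\<in>set gs. in_P n g" and Z0n: "set Z0 \<subseteq> {..<n}"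
    and inv: "INV n gs Z0 (Run L Z w d)" and st: "oc_step n (delta gs) (Run L Z w d) c'"
  shows "INV n gs Z0 c'"
proof -
  let ?\<delta> = "delta gs"
  from st consider (f) "c' = Done None"
    | (c) gs' where "step_i n ?\<delta> L Z gs'" "{z \<in> set Z. var z \<in> set gs'} \<noteq> {}"
      "c' = (let Zt = {z \<in> set Z. var z \<in> set gs'}; Z' = filter (\<lambda>z. z \<notin> Zt) Z;
               w' = (\<lambda>k. if k \<in> Zt then d else w k) in
             if Z' = [] then Done (Some (map w' [0..<n])) else Run (map (restrictZ (set Z')) gs') Z' w' (2 * ?\<delta> * d + 1))"
    by (cases rule: oc_step.cases) (auto simp: Let_def)
  then show ?thesis
  proof cases
    case f then show ?thesis unfolding INV_def by simp
  next
    case c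
    define Zt where "Zt = {z \<in> set Z. var z \<in> set gs'}"
    define Z' where "Z' = filter (\<lambda>z. z \<notin> Zt) Z"
    define w' where "w' = (\<lambda>k. if k \<in> Zt then d else w k)"
    define d' where "d' = 2 * ?\<delta> * d + 1"
    have c': "c' = (if Z' = [] then Done (Some (map w' [0..<n])) else Run (map (restrictZ (set Z')) gs') Z' w' d')"
      using c(3) unfolding Zt_def[symmetric] Z'_def[symmetric] w'_def[symmetric] d'_def[symmetric] Let_def by simp
    have dZ: "distinct Z" and ZZ0: "set Z \<subseteq> set Z0" and wZ: "\<forall>k\<in>set Z. w k = 0"
      and wb: "\<forall>k. 2 * ?\<delta> * w k + 1 \<le> d"
      and Lg: "\<forall>p\<in>set L. lowdeg ?\<delta> p \<and> good n gs (set Z) w ((d - 1) div 2) p"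
      and Lf: "\<forall>z\<in>set Z0 - set Z. found n gs (set Z) w z"
      using inv unfolding INV_def by simp_all
    have dpos: "d \<ge> 1" using wb by (metis add_leD2)
    have wi: "w i \<le> (d - 1) div 2" for i
    proof -
      have "2 * w i \<le> 2 * ?\<delta> * w i" using d1 by simp
      then have "2 * w i + 1 \<le> d" using wb by (metis add_le_mono1 order_trans)
      then show ?thesis by linarith
    qed
    have wid: "w i \<le> d" for i using wi[of i] by linarith
    have setZ': "set Z' = set Z - Zt" unfolding Z'_def by (rule set_filter_notin)
    have ZtZ: "Zt \<subseteq> set Z" unfolding Zt_def by blast
    have w'eq: "w' i = w i" if "i \<notin> set Z" for i using that ZtZ unfolding w'_def by auto
    obtain tau hs where hs1: "kspan (set hs) = kspan (set [var i * g. i \<leftarrow> [0..<n], i \<notin> set Z, g \<leftarrow> L])"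
      and li: "LI Z (L @ filter (\<lambda>h. pdeg h \<le> ?\<delta>) hs) gs'"
      using c(1) unfolding step_i_def Let_def by blast
    define S2 where "S2 = {p. lowdeg ?\<delta> p} \<inter> {p. good n gs (set Z) w (d - 1) p}"
    have S2sub: "M.subspace S2" unfolding S2_def lowdeg_def
      by (intro M.subspace_inter keys_sub_subspace good_subspace)
    have Hgood: "set [var i * g. i \<leftarrow> [0..<n], i \<notin> set Z, g \<leftarrow> L] \<subseteq> {p. good n gs (set Z) w (d - 1) p}"
    proof
      fix h assume "h \<in> set [var i * g. i \<leftarrow> [0..<n], i \<notin> set Z, g \<leftarrow> L]"
      then obtain i g where ig: "i < n" "i \<notin> set Z" "g \<in> set L" "h = var i * g" by auto
      have "good n gs (set Z) w ((d - 1) div 2) g" using Lg ig(3) by blast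
      moreover have "w i + (d - 1) div 2 \<le> d - 1" using wi[of i] by linarith
      ultimately have "good n gs (set Z) w (d - 1) (var i * g)" using ig by (intro good_mult_var) auto
      then show "h \<in> {p. good n gs (set Z) w (d - 1) p}" using ig by simp
    qed
    have hsgood: "kspan (set hs) \<subseteq> {p. good n gs (set Z) w (d - 1) p}"
      unfolding hs1 by (rule M.span_minimal[OF Hgood good_subspace])
    have in2: "set (L @ filter (\<lambda>h. pdeg h \<le> ?\<delta>) hs) \<subseteq> S2"
    proof
      fix p assume "p \<in> set (L @ filter (\<lambda>h. pdeg h \<le> ?\<delta>) hs)"
      then consider (l) "p \<in> set L" | (h) "p \<in> set hs" "pdeg p \<le> ?\<delta>" by auto
      then show "p \<in> S2"
      proof cases
        case l
        then have "lowdeg ?\<delta> p" "good n gs (set Z) w ((d - 1) div 2) p" using Lg by blast+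
        moreover have "(d - 1) div 2 \<le> d - 1" by simp
        ultimately show ?thesis unfolding S2_def using good_mono by blast
      next
        case h
        have "p \<in> kspan (set hs)" using h(1) by (rule M.span_base)
        then have "good n gs (set Z) w (d - 1) p" using hsgood by blast
        moreover have "lowdeg ?\<delta> p" unfolding lowdeg_def using pdeg_ge h(2) order_trans by blast
        ultimately show ?thesis unfolding S2_def by blast
      qed
    qed
    have "kspan (set gs') = kspan (set (L @ filter (\<lambda>h. pdeg h \<le> ?\<delta>) hs))"
      using li unfolding LI_def by blast
    also have "\<dots> \<subseteq> S2" by (rule M.span_minimal[OF in2 S2sub])
    finally have gs'S2: "\<forall>p\<in>set gs'. p \<in> S2" using M.span_superset by blast
    have fnew: "found n gs (set Z') w' z" if "z \<in> set Z0 - set Z'" for z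
    proof (cases "z \<in> Zt")
      case True
      then have zZ: "z \<in> set Z" "var z \<in> set gs'" unfolding Zt_def by auto
      then have "good n gs (set Z) w (d - 1) (var z)" using gs'S2 unfolding S2_def by blast
      then obtain G where G: "G \<in> ideal_P n gs" "\<forall>t\<in>ks (G - var z). (\<forall>y\<in>set Z. lk t y = 0) \<and> wsum w t \<le> d - 1"
        unfolding good_def by blast
      define J where "J = G - var z"
      have "var z + J \<in> ideal_P n gs" unfolding J_def using G(1) by simp
      moreover have "\<forall>t\<in>ks J. (\<forall>y\<in>set Z'. lk t y = 0) \<and> lk t z = 0 \<and> wsum w' t < w' z"
      proof
        fix t assume t: "t \<in> ks J"
        have tz: "\<forall>y\<in>set Z. lk t y = 0" "wsum w t \<le> d - 1" using t G(2) unfolding J_def by blast+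
        have "wsum w' t = wsum w t"
        proof (rule wsum_cong)
          fix i assume "i \<in> ks t"
          then have "i \<notin> set Z" using tz(1) by (auto simp: in_keys_iff)
          then show "w' i = w i" by (rule w'eq)
        qed
        moreover have "w' z = d" unfolding w'_def using True by simp
        ultimately show "(\<forall>y\<in>set Z'. lk t y = 0) \<and> lk t z = 0 \<and> wsum w' t < w' z"
          using tz zZ(1) dpos setZ' by auto
      qed
      ultimately show ?thesis unfolding found_def by blast
    next
      case False
      then have zZ: "z \<in> set Z0 - set Z" using that setZ' by auto
      then obtain J where J: "var z + J \<in> ideal_P n gs" "\<forall>t\<in>ks J. (\<forall>y\<in>set Z. lk t y = 0) \<and> lk t z = 0 \<and> wsum w t < w z"
        using Lf unfolding found_def by blast
      have "\<forall>t\<in>ks J. (\<forall>y\<in>set Z'. lk t y = 0) \<and> lk t z = 0 \<and> wsum w' t < w' z"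
      proof
        fix t assume t: "t \<in> ks J"
        have tz: "\<forall>y\<in>set Z. lk t y = 0" "lk t z = 0" "wsum w t < w z" using t J(2) by blast+
        have "wsum w' t = wsum w t"
        proof (rule wsum_cong)
          fix i assume "i \<in> ks t"
          then have "i \<notin> set Z" using tz(1) by (auto simp: in_keys_iff)
          then show "w' i = w i" by (rule w'eq)
        qed
        moreover have "w' z = w z" using zZ by (intro w'eq) blast
        ultimately show "(\<forall>y\<in>set Z'. lk t y = 0) \<and> lk t z = 0 \<and> wsum w' t < w' z"
          using tz setZ' by auto
      qed
      then show ?thesis unfolding found_def using J(1) by blast
    qed
    show ?thesis
    proof (cases "Z' = []")
      case True
      then have "c' = Done (Some (map w' [0..<n]))" using c' by simp
      moreover have "\<forall>z\<in>set Z0. found n gs {} w' z" using fnew True by simp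
      ultimately show ?thesis unfolding INV_def using final_from_found[OF gsP Z0n] by simp
    next
      case False
      then have cc: "c' = Run (map (restrictZ (set Z')) gs') Z' w' d'" using c' by simp
      have i1: "distinct Z'" unfolding Z'_def using dZ by simp
      have i2: "set Z' \<subseteq> set Z0" using setZ' ZZ0 by blast
      have i3: "\<forall>k\<in>set Z'. w' k = 0" using setZ' wZ unfolding w'_def by auto
      have i4: "\<forall>k. 2 * ?\<delta> * w' k + 1 \<le> d'"
      proof
        fix k
        have "w' k \<le> d" unfolding w'_def using wid by simp
        then have "2 * ?\<delta> * w' k \<le> 2 * ?\<delta> * d" by simp
        then show "2 * ?\<delta> * w' k + 1 \<le> d'" unfolding d'_def by simp
      qed
      have dd: "(d' - 1) div 2 = ?\<delta> * d" unfolding d'_def by simp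
      have i5: "\<forall>p\<in>set (map (restrictZ (set Z')) gs'). lowdeg ?\<delta> p \<and> good n gs (set Z') w' ((d' - 1) div 2) p"
      proof
        fix p'' assume "p'' \<in> set (map (restrictZ (set Z')) gs')"
        then obtain p where p: "p \<in> set gs'" "p'' = restrictZ (set Z') p" by auto
        have pS2: "lowdeg ?\<delta> p" "good n gs (set Z) w (d - 1) p" using gs'S2 p(1) unfolding S2_def by blast+
        have "lowdeg ?\<delta> p''" using pS2(1) keys_restrictZ unfolding p(2) lowdeg_def by blast
        moreover have "good n gs (set Z') w' (?\<delta> * d) p''"
        proof -
          obtain G where G: "G \<in> ideal_P n gs" "\<forall>t\<in>ks (G - p). (\<forall>y\<in>set Z. lk t y = 0) \<and> wsum w t \<le> d - 1"
            using pS2(2) unfolding good_def by blast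
          have e: "G - p'' = (G - p) + (p - p'')" by simp
          have "\<forall>t\<in>ks (G - p''). (\<forall>y\<in>set Z'. lk t y = 0) \<and> wsum w' t \<le> ?\<delta> * d"
          proof
            fix t assume "t \<in> ks (G - p'')"
            then have "t \<in> ks (G - p) \<or> t \<in> ks (p - p'')" using keys_add[of "G - p" "p - p''"] unfolding e by blast
            then show "(\<forall>y\<in>set Z'. lk t y = 0) \<and> wsum w' t \<le> ?\<delta> * d"
            proof
              assume t: "t \<in> ks (G - p)"
              have tz: "\<forall>y\<in>set Z. lk t y = 0" "wsum w t \<le> d - 1" using t G(2) by blast+
              have "wsum w' t = wsum w t"
              proof (rule wsum_cong)
                fix i assume "i \<in> ks t"
                then have "i \<notin> set Z" using tz(1) by (auto simp: in_keys_iff)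
                then show "w' i = w i" by (rule w'eq)
              qed
              moreover have "d - 1 \<le> ?\<delta> * d" using d1 dpos by (metis diff_le_self mult_le_mono1 mult_1 order_trans)
              ultimately show ?thesis using tz setZ' by auto
            next
              assume t: "t \<in> ks (p - p'')"
              then have tp: "t \<in> ks p" and tZ': "\<forall>y\<in>set Z'. lk t y = 0"
                using keys_restrict_diff[of t p "set Z'"] unfolding p(2) by blast+
              have "wsum w' t \<le> d * tdeg t"
              proof (rule wsum_bound)
                fix i assume i: "i \<in> ks t"
                show "w' i \<le> d"
                proof (cases "i \<in> set Z")
                  case True
                  then have "i \<notin> set Z'" using tZ' i by (auto simp: in_keys_iff)
                  then have "i \<in> Zt" using True setZ' by blast
                  then show ?thesis unfolding w'_def by simp
                next
                  case False then show ?thesis using w'eq wid by simp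
                qed
              qed
              also have "\<dots> \<le> d * ?\<delta>" using pS2(1) tp unfolding lowdeg_def by auto
              finally show ?thesis using tZ' by (simp add: mult.commute)
            qed
          qed
          then show ?thesis unfolding good_def using G(1) by blast
        qed
        ultimately show "lowdeg ?\<delta> p'' \<and> good n gs (set Z') w' ((d' - 1) div 2) p''" unfolding dd by blast
      qed
      have i6: "\<forall>z\<in>set Z0 - set Z'. found n gs (set Z') w' z" using fnew by blast
      show ?thesis unfolding cc INV_def using i1 i2 i3 i4 i5 i6 by simp
    qed
  qed
qed

lemma tdeg_zero: "tdeg t = 0 \<Longrightarrow> t = 0"
proof -
  assume a: "tdeg t = 0"
  have "\<forall>i\<in>ks t. lk t i = 0" using a unfolding tdeg_def by (simp add: sum_eq_0_iff)
  then have "\<And>i. lk t i = 0" by (metis in_keys_iff)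
  then show "t = 0" by (intro poly_mapping_eqI) simp
qed

lemma delta_pos:
  fixes gs :: "'a::field mpoly list"
  assumes ne: "gs \<noteq> []" and gsP: "\<forall>g\<in>set gs. g \<noteq> 0 \<and> in_P n g" and pr: "1 \<notin> ideal_P n gs"
  shows "1 \<le> delta gs"
proof (rule ccontr)
  assume "\<not> 1 \<le> delta gs"
  then have d0: "delta gs = 0" by simp
  define g where "g = gs ! 0"
  have gin: "g \<in> set gs" unfolding g_def using ne by simp
  have gnz: "g \<noteq> 0" using gsP gin by blast
  have k0: "ks g \<subseteq> {0}"
  proof
    fix t assume t: "t \<in> ks g"
    have "tdeg t \<le> pdeg g" using t by (rule pdeg_ge)
    also have "\<dots> \<le> delta gs" using gin by (rule delta_ge)
    finally have "tdeg t = 0" using d0 by simp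
    then show "t \<in> {0}" using tdeg_zero by simp
  qed
  define c where "c = lk g 0"
  have geq: "g = Poly_Mapping.single 0 c"
  proof (rule poly_mapping_eqI)
    fix t show "lk g t = lk (Poly_Mapping.single 0 c) t"
    proof (cases "t = 0")
      case True then show ?thesis unfolding c_def by simp
    next
      case False
      then have "t \<notin> ks g" using k0 by blast
      then show ?thesis using False by (simp add: in_keys_iff lookup_single)
    qed
  qed
  have cnz: "c \<noteq> 0" using gnz geq by auto
  have "Poly_Mapping.single 0 (1 / c) * g = 1" unfolding geq mult_single using cnz by simp
  moreover have "Poly_Mapping.single 0 (1 / c) * g \<in> ideal_P n gs"
    using ideal_gen[of 0 gs n] ne in_P_single0 unfolding g_def by (intro ideal_mult) auto
  ultimately show False using pr by simp
qed

lemma inv_step_gen: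
  fixes gs :: "'a::field mpoly list"
  assumes d1: "delta gs \<ge> 1" and gsP: "\<forall>g\<in>set gs. in_P n g" and Z0n: "set Z0 \<subseteq> {..<n}"
    and inv: "INV n gs Z0 c" and st: "oc_step n (delta gs) c c'"
  shows "INV n gs Z0 c'"
proof (cases c)
  case (Run L Z w d) then show ?thesis using inv_step[OF d1 gsP Z0n] inv st by blast
next
  case (Done r)
  have "oc_step n (delta gs) (Done r) c'" using st Done by simp
  then show ?thesis by (cases rule: oc_step.cases)
qed

lemma reach_inv:
  fixes gs :: "'a::field mpoly list"
  assumes d1: "delta gs \<ge> 1" and gsP: "\<forall>g\<in>set gs. in_P n g" and Z0n: "set Z0 \<subseteq> {..<n}"
    and dZ: "distinct Z0"
  shows "oc_reachable n gs Z0 c \<Longrightarrow> INV n gs Z0 c"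
  unfolding oc_reachable_def
proof (induction rule: rtranclp_induct)
  case base then show ?case using inv_init[OF dZ] by blast
next
  case (step b c) then show ?case using inv_step_gen[OF d1 gsP Z0n] by blast
qed

lemma progress:
  fixes gs :: "'a::field mpoly list"
  assumes inv: "INV n gs Z0 c"
  shows "(\<exists>r. c = Done r) \<or> (\<exists>c'. oc_step n \<delta> c c')"
proof (cases c)
  case (Done r) then show ?thesis by blast
next
  case (Run L Z w d)
  then have dZ: "distinct Z" using inv unfolding INV_def by simp
  obtain gs' where st: "step_i n \<delta> L Z gs'" using step_i_exists[OF dZ] by blast
  show ?thesis
  proof (cases "{z \<in> set Z. var z \<in> set gs'} = {}")
    case True
    then have "oc_step n \<delta> (Run L Z w d) (Done None)" using st by (intro oc_step.fail)
    then show ?thesis using Run by blast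
  next
    case False
    from oc_step.cont[OF st refl False refl refl refl refl refl] show ?thesis using Run by blast
  qed
qed

definition mu :: "'p oc_config \<Rightarrow> nat" where
  "mu c = (case c of Run _ Z _ _ \<Rightarrow> Suc (length Z) | Done _ \<Rightarrow> 0)"

lemma step_mu: "oc_step n \<delta> c c' \<Longrightarrow> mu c' < mu c"
proof (induction rule: oc_step.induct)
  case (fail gs Z gs' w d) then show ?case unfolding mu_def by simp
next
  case (cont gs Z gs' Zt Z' w' d w gs'' d' c')
  obtain z where "z \<in> set Z" "z \<in> Zt" using cont by blast
  then have "length Z' < length Z" unfolding cont by (intro length_filter_less) auto
  then show ?case unfolding mu_def cont by simp
qed

theorem mainTheorem4:
  fixes n :: nat and gs :: "'a::field mpoly list" and Z :: "nat list"
  assumes gs_ne: "gs \<noteq> []"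
    and gs_P: "\<forall>g\<in>set gs. g \<noteq> 0 \<and> in_P n g"
    and proper: "1 \<notin> ideal_P n gs"
    and Z_dist: "distinct Z" and Z_vars: "set Z \<subseteq> {..<n}"
  shows
    \<comment> \<open>termination: no run gets stuck before returning, and every run is finite\<close>
    "(\<forall>c. oc_reachable n gs Z c \<longrightarrow> (\<exists>r. c = Done r) \<or> (\<exists>c'. oc_step n (delta gs) c c'))
     \<and> wfP (\<lambda>c' c. oc_reachable n gs Z c \<and> oc_step n (delta gs) c c')
     \<and> (\<forall>W. oc_reachable n gs Z (Done (Some W)) \<longrightarrow>
          length W = n \<and>
          (\<exists>fs. length fs = length Z \<and> set fs \<subseteq> ideal_P n gs \<and> Z_separating n Z fs \<and>
                (\<forall>lt. term_order n lt \<and> W_compatible n W lt \<longrightarrow>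
                      (\<forall>i<length Z. is_LT lt (fs ! i) (var_term (Z ! i))))))"
proof -
  have d1: "1 \<le> delta gs" by (rule delta_pos[OF gs_ne gs_P proper])
  have gsP: "\<forall>g\<in>set gs. in_P n g" using gs_P by blast
  have inv: "INV n gs Z c" if "oc_reachable n gs Z c" for c
    using reach_inv[OF d1 gsP Z_vars Z_dist that] .
  have c1: "\<forall>c. oc_reachable n gs Z c \<longrightarrow> (\<exists>r. c = Done r) \<or> (\<exists>c'. oc_step n (delta gs) c c')"
    using inv progress by blast
  have c2: "wfP (\<lambda>c' c. oc_reachable n gs Z c \<and> oc_step n (delta gs) c c')"
    by (rule wfp_if_convertible_to_nat[where f = mu]) (use step_mu in blast)
  have c3: "\<forall>W. oc_reachable n gs Z (Done (Some W)) \<longrightarrow> final n gs Z W"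
    using inv unfolding INV_def by fastforce
  show ?thesis using c1 c2 c3 unfolding final_def by blast
qed

end
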